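(* In the setting of the context, for each white vertex $v\in\mathcal{V}_L^W$ define $$a_{v,\sigma}=\sum_{u\in R(v)}\Big(\sum_{j=1}^{N(v\to u)}(-1)^{|(v\to u)_j|-1}\Big)c_{u,\sigma},$$ where $(v\to u)_1,\dots,(v\to u)_{N(v\to u)}$ are the distinct directed paths from $v$ to $u$ and $|(v\to u)_j|$ is the number of vertices on the path. Then $\{a_{v,\sigma}^\dagger,b_{l,\sigma}\}=0$ for all $v\in\mathcal{V}_L^W$ and all $l=1,\dots,L$, $\{c^\dagger_{u,\sigma},a_{v,\sigma}\}=\delta_{u,v}$ for $u,v\in\mathcal{V}_L^W$, and the single-electron states $a^\dagger_{v,\sigma}\Phi_0$, $v\in\mathcal{V}_L^W$, form a basis of the zero-energy eigenspace of $H_{\mathrm{hop}}$ in the single-electron, spin-$\sigma$ sector; in particular $|\mathcal{V}_L^W|=|\mathcal{V}_L|-L$.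
   Context: Construction. Let $G_l=(V_l,E_l)$, $l=1,\dots,L$, be complete graphs with $|V_l|\ge 2$. In each $V_l$ one vertex $v_l^0$ is painted black, the others white. Set $\mathcal{G}_1=G_1$. For $l=2,\dots,L$: choose an integer $z_l$ with $0<z_l\le |V_l|-1$, choose $z_l$ white vertices of $V_l$ and identify each with a vertex (black or white; distinct with distinct) of $\mathcal{V}_{l-1}$; $\mathcal{V}_l=\mathcal{V}_{l-1}\cup V_l$ with these identifications and $\mathcal{E}_l=\mathcal{E}_{l-1}\cup E_l$ (edges joining the same two vertices merged). A white vertex identified with a black one becomes black; two identified white vertices stay white; $v_l^0$ is never identified with an earlier vertex. The black vertices of $\mathcal{G}_L$ are exactly $v_1^0,\dots,v_L^0$; $\mathcal{V}_L^W$ denotes the set of white vertices; $V_l$ is regarded as a subset of $\mathcal{V}_L$. Directed graph: the directed edge set is $\vec{\mathcal{E}}_L=\bigcup_{l=1}^L\{(v,v_l^0): v\in V_l\setminus\{v_l^0\}\}$ (with the identifications above). A directed path from $v$ to $u$ is a sequence $(v_0,\dots,v_k)$ with $v_0=v$, $v_k=u$, $(v_{j-1},v_j)\in\vec{\mathcal{E}}_L$; the trivial sequence $(v)$ counts as a path from $v$ to $v$. For $v\in\mathcal{V}_L^W$, $R(v)$ is the set of vertices reachable from $v$ by directed paths (including $v$) and $N(v\to u)$ is the number of directed paths from $v$ to $u$. Fermions $c_{v,\sigma}$ on $\mathcal{V}_L$ satisfy the canonical anticommutation relations; $\Phi_0$ is the vacuum; $b_{l,\sigma}=\sum_{v\in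 V_l}c_{v,\sigma}$; $H_{\mathrm{hop}}=t\sum_{l=1}^L\sum_\sigma b_{l,\sigma}^\dagger b_{l,\sigma}$ with $t>0$. *)

theory Defs
  imports Complex_Main "HOL-Library.Product_Lexorder"
begin

text \<open>After all identifications, every vertex lives in one vertex type 'v, and
  V l is the vertex set of the complete graph G_l regarded as a subset of the
  final vertex set; v0 l is its black vertex.\<close>

definition construction :: "nat \<Rightarrow> (nat \<Rightarrow> 'v set) \<Rightarrow> (nat \<Rightarrow> 'v) \<Rightarrow> bool" where
  "construction L V v0 \<longleftrightarrow>
     L \<ge> 1 \<and>
     (\<forall>l\<in>{1..L}. finite (V l) \<and> card (V l) \<ge> 2 \<and> v0 l \<in> V l) \<and>
     (\<forall>l\<in>{2..L}. v0 l \<notin> (\<Union>k\<in>{1..<l}. V k) \<and>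
                  V l \<inter> (\<Union>k\<in>{1..<l}. V k) \<noteq> {})"

definition all_vertices :: "nat \<Rightarrow> (nat \<Rightarrow> 'v set) \<Rightarrow> 'v set" where
  "all_vertices L V = (\<Union>l\<in>{1..L}. V l)"

definition white_vertices :: "nat \<Rightarrow> (nat \<Rightarrow> 'v set) \<Rightarrow> (nat \<Rightarrow> 'v) \<Rightarrow> 'v set" where
  "white_vertices L V v0 = all_vertices L V - v0 ` {1..L}"

definition dedge :: "nat \<Rightarrow> (nat \<Rightarrow> 'v set) \<Rightarrow> (nat \<Rightarrow> 'v) \<Rightarrow> 'v \<Rightarrow> 'v \<Rightarrow> bool" where
  "dedge L V v0 u w \<longleftrightarrow> (\<exists>l\<in>{1..L}. w = v0 l \<and> u \<in> V l \<and> u \<noteq> v0 l)"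

text \<open>Directed paths as nonempty vertex lists; the one-element list is the trivial path.\<close>
definition dpaths :: "nat \<Rightarrow> (nat \<Rightarrow> 'v set) \<Rightarrow> (nat \<Rightarrow> 'v) \<Rightarrow> 'v \<Rightarrow> 'v \<Rightarrow> 'v list set" where
  "dpaths L V v0 v u = {p. p \<noteq> [] \<and> hd p = v \<and> last p = u \<and> successively (dedge L V v0) p}"

definition reach :: "nat \<Rightarrow> (nat \<Rightarrow> 'v set) \<Rightarrow> (nat \<Rightarrow> 'v) \<Rightarrow> 'v \<Rightarrow> 'v set" where
  "reach L V v0 v = {u. dpaths L V v0 v u \<noteq> {}}"

definition npaths :: "nat \<Rightarrow> (nat \<Rightarrow> 'v set) \<Rightarrow> (nat \<Rightarrow> 'v) \<Rightarrow> 'v \<Rightarrow> 'v \<Rightarrow> nat" where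
  "npaths L V v0 v u = card (dpaths L V v0 v u)"

definition path_sign_sum :: "nat \<Rightarrow> (nat \<Rightarrow> 'v set) \<Rightarrow> (nat \<Rightarrow> 'v) \<Rightarrow> 'v \<Rightarrow> 'v \<Rightarrow> int" where
  "path_sign_sum L V v0 v u = (\<Sum>p\<in>dpaths L V v0 v u. (-1) ^ (length p - 1))"

text \<open>Modes are of a linearly ordered type 'm.  A state is a coefficient function on
  sets of occupied modes, w.r.t. the basis c^dag_{x1} ... c^dag_{xk} Phi0 with x1 < ... < xk.\<close>

type_synonym 'm fock = "'m set \<Rightarrow> complex"

definition fsign :: "'m::linorder \<Rightarrow> 'm set \<Rightarrow> complex" where
  "fsign x S = (-1) ^ card {y\<in>S. y < x}"

definition ann :: "'m::linorder \<Rightarrow> 'm fock \<Rightarrow> 'm fock" where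
  "ann x \<psi> = (\<lambda>S. if x \<in> S then 0 else fsign x S * \<psi> (insert x S))"

definition cre :: "'m::linorder \<Rightarrow> 'm fock \<Rightarrow> 'm fock" where
  "cre x \<psi> = (\<lambda>S. if x \<in> S then fsign x (S - {x}) * \<psi> (S - {x}) else 0)"

definition ann_comb :: "('m::{linorder,finite} \<Rightarrow> complex) \<Rightarrow> 'm fock \<Rightarrow> 'm fock" where
  "ann_comb \<alpha> \<psi> = (\<lambda>S. \<Sum>x\<in>UNIV. \<alpha> x * ann x \<psi> S)"

definition cre_comb :: "('m::{linorder,finite} \<Rightarrow> complex) \<Rightarrow> 'm fock \<Rightarrow> 'm fock" where
  "cre_comb \<alpha> \<psi> = (\<lambda>S. \<Sum>x\<in>UNIV. cnj (\<alpha> x) * cre x \<psi> S)"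

definition anticomm :: "('m fock \<Rightarrow> 'm fock) \<Rightarrow> ('m fock \<Rightarrow> 'm fock) \<Rightarrow> 'm fock \<Rightarrow> 'm fock" where
  "anticomm A B = (\<lambda>\<psi> S. A (B \<psi>) S + B (A \<psi>) S)"

definition vacuum :: "'m fock" where
  "vacuum = (\<lambda>S. if S = {} then 1 else 0)"

text \<open>Modes are (vertex, spin); spin is represented by bool.\<close>

definition b_coef :: "(nat \<Rightarrow> 'v set) \<Rightarrow> nat \<Rightarrow> bool \<Rightarrow> 'v \<times> bool \<Rightarrow> complex" where
  "b_coef V l \<sigma> = (\<lambda>(u, \<tau>). if \<tau> = \<sigma> \<and> u \<in> V l then 1 else 0)"

definition b_op :: "(nat \<Rightarrow> 'v set) \<Rightarrow> nat \<Rightarrow> bool \<Rightarrow> ('v::{finite,linorder} \<times> bool) fock \<Rightarrow> ('v \<times> bool) fock" where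
  "b_op V l \<sigma> = ann_comb (b_coef V l \<sigma>)"

definition b_dag :: "(nat \<Rightarrow> 'v set) \<Rightarrow> nat \<Rightarrow> bool \<Rightarrow> ('v::{finite,linorder} \<times> bool) fock \<Rightarrow> ('v \<times> bool) fock" where
  "b_dag V l \<sigma> = cre_comb (b_coef V l \<sigma>)"

definition H_hop :: "real \<Rightarrow> nat \<Rightarrow> (nat \<Rightarrow> 'v set) \<Rightarrow> ('v::{finite,linorder} \<times> bool) fock \<Rightarrow> ('v \<times> bool) fock" where
  "H_hop t L V \<psi> = (\<lambda>S. complex_of_real t *
      (\<Sum>l\<in>{1..L}. \<Sum>\<sigma>\<in>UNIV. b_dag V l \<sigma> (b_op V l \<sigma> \<psi>) S))"

definition a_coef :: "nat \<Rightarrow> (nat \<Rightarrow> 'v set) \<Rightarrow> (nat \<Rightarrow> 'v) \<Rightarrow> 'v \<Rightarrow> bool \<Rightarrow> 'v \<times> bool \<Rightarrow> complex" where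
  "a_coef L V v0 v \<sigma> = (\<lambda>(u, \<tau>). if \<tau> = \<sigma> \<and> u \<in> reach L V v0 v
       then of_int (path_sign_sum L V v0 v u) else 0)"

definition a_op :: "nat \<Rightarrow> (nat \<Rightarrow> 'v set) \<Rightarrow> (nat \<Rightarrow> 'v) \<Rightarrow> 'v \<Rightarrow> bool \<Rightarrow> ('v::{finite,linorder} \<times> bool) fock \<Rightarrow> ('v \<times> bool) fock" where
  "a_op L V v0 v \<sigma> = ann_comb (a_coef L V v0 v \<sigma>)"

definition a_dag :: "nat \<Rightarrow> (nat \<Rightarrow> 'v set) \<Rightarrow> (nat \<Rightarrow> 'v) \<Rightarrow> 'v \<Rightarrow> bool \<Rightarrow> ('v::{finite,linorder} \<times> bool) fock \<Rightarrow> ('v \<times> bool) fock" where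
  "a_dag L V v0 v \<sigma> = cre_comb (a_coef L V v0 v \<sigma>)"

definition one_electron_sector :: "nat \<Rightarrow> (nat \<Rightarrow> 'v set) \<Rightarrow> bool \<Rightarrow> ('v \<times> bool) fock set" where
  "one_electron_sector L V \<sigma> =
     {\<psi>. \<forall>S. \<psi> S \<noteq> 0 \<longrightarrow> (\<exists>u\<in>all_vertices L V. S = {(u, \<sigma>)})}"

definition zero_energy_space :: "real \<Rightarrow> nat \<Rightarrow> (nat \<Rightarrow> 'v set) \<Rightarrow> bool \<Rightarrow> ('v::{finite,linorder} \<times> bool) fock set" where
  "zero_energy_space t L V \<sigma> = {\<psi> \<in> one_electron_sector L V \<sigma>. H_hop t L V \<psi> = (\<lambda>S. 0)}"

definition is_basis_of :: "'i set \<Rightarrow> ('i \<Rightarrow> 'm fock) \<Rightarrow> 'm fock set \<Rightarrow> bool" where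
  "is_basis_of I f E \<longleftrightarrow>
     (\<forall>i\<in>I. f i \<in> E) \<and>
     (\<forall>\<beta>. (\<forall>S. (\<Sum>i\<in>I. \<beta> i * f i S) = 0) \<longrightarrow> (\<forall>i\<in>I. \<beta> i = 0)) \<and>
     (\<forall>\<psi>\<in>E. \<exists>\<beta>. \<psi> = (\<lambda>S. \<Sum>i\<in>I. \<beta> i * f i S))"

end

theory Submission
  imports Defs
begin


lemma fsign_sq: "fsign x S * fsign x S = 1"
  unfolding fsign_def by (simp flip: power_mult_distrib)

lemma fsign_insert:
  fixes y z :: "'m::{linorder,finite}"
  assumes "z \<notin> T" "z \<noteq> y"
  shows "fsign y (insert z T) = (if z < y then - fsign y T else fsign y T)"
proof -
  have fin: "finite {w\<in>T. w<y}" by simp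
  show ?thesis
  proof (cases "z < y")
    case True
    then have "{w\<in>insert z T. w<y} = insert z {w\<in>T. w<y}" by auto
    then show ?thesis using True assms fin unfolding fsign_def by simp
  next
    case False
    then have "{w\<in>insert z T. w<y} = {w\<in>T. w<y}" by auto
    then show ?thesis using False unfolding fsign_def by simp
  qed
qed

lemma car:
  fixes x y :: "'m::{linorder,finite}"
  shows "cre x (ann y \<psi>) S + ann y (cre x \<psi>) S = (if x = y then \<psi> S else 0)"
proof (cases "x = y")
  case True
  show ?thesis
  proof (cases "x \<in> S")
    case True
    have "cre x (ann x \<psi>) S = fsign x (S - {x}) * (fsign x (S - {x}) * \<psi> (insert x (S - {x})))"
      using True by (simp add: cre_def ann_def)
    also have "\<dots> = \<psi> S" using True
      by (simp add: insert_absorb fsign_sq mult.assoc[symmetric])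
    finally show ?thesis using True \<open>x = y\<close> by (simp add: ann_def)
  next
    case False
    have "ann x (cre x \<psi>) S = fsign x S * (fsign x (insert x S - {x}) * \<psi> (insert x S - {x}))"
      using False by (simp add: cre_def ann_def)
    also have "\<dots> = \<psi> S" using False
      by (simp add: fsign_sq mult.assoc[symmetric])
    finally show ?thesis using False \<open>x = y\<close> by (simp add: cre_def)
  qed
next
  case ne: False
  show ?thesis
  proof (cases "x \<in> S \<and> y \<notin> S")
    case True
    define T where "T = S - {x}"
    have S: "S = insert x T" "x \<notin> T" "y \<notin> T" using True T_def by auto
    have e: "insert y S - {x} = insert y T" using S ne by auto
    have f1: "fsign y S = (if x < y then - fsign y T else fsign y T)"
      using S ne fsign_insert by metis
    have f2: "fsign x (insert y T) = (if y < x then - fsign x T else fsign x T)"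
      using S ne fsign_insert by metis
    have c1: "cre x (ann y \<psi>) S = fsign x T * (fsign y T * \<psi> (insert y T))"
      using True \<open>y \<notin> T\<close> by (simp add: cre_def ann_def T_def[symmetric])
    have c2: "ann y (cre x \<psi>) S = fsign y S * (fsign x (insert y T) * \<psi> (insert y T))"
      using True e by (simp add: cre_def ann_def)
    have "cre x (ann y \<psi>) S + ann y (cre x \<psi>) S = 0"
    proof (cases "x < y")
      case True
      then have "\<not> y < x" by simp
      then have "fsign y S = - fsign y T" "fsign x (insert y T) = fsign x T"
        using f1 f2 True by simp_all
      then show ?thesis unfolding c1 c2 by (simp add: algebra_simps)
    next
      case False
      then have "y < x" using ne by simp
      then have "fsign y S = fsign y T" "fsign x (insert y T) = - fsign x T"
        using f1 f2 False by simp_all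
      then show ?thesis unfolding c1 c2 by (simp add: algebra_simps)
    qed
    then show ?thesis using ne by simp
  next
    case False
    have "cre x (ann y \<psi>) S = 0"
    proof (cases "x \<in> S")
      case True
      then have "y \<in> S - {x}" using False ne by auto
      then show ?thesis using True by (simp add: cre_def ann_def)
    qed (simp add: cre_def)
    moreover have "ann y (cre x \<psi>) S = 0"
    proof (cases "y \<in> S")
      case False
      then have "x \<notin> insert y S" using \<open>\<not> (x \<in> S \<and> y \<notin> S)\<close> ne by auto
      then show ?thesis using False by (simp add: cre_def ann_def)
    qed (simp add: ann_def)
    ultimately show ?thesis using ne by simp
  qed
qed

lemma cre_lin: "cre y (\<lambda>T. \<Sum>x\<in>A. c x * g x T) S = (\<Sum>x\<in>A. c x * cre y (g x) S)"
  unfolding cre_def by (simp add: sum_distrib_left algebra_simps)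

lemma ann_lin: "ann y (\<lambda>T. \<Sum>x\<in>A. c x * g x T) S = (\<Sum>x\<in>A. c x * ann y (g x) S)"
  unfolding ann_def by (simp add: sum_distrib_left algebra_simps)

lemma anticomm_cre_comb1:
  fixes y :: "'m::{linorder,finite}"
  shows "anticomm (cre y) (ann_comb \<beta>) \<psi> S = \<beta> y * \<psi> S"
proof -
  have "anticomm (cre y) (ann_comb \<beta>) \<psi> S
      = (\<Sum>x\<in>UNIV. \<beta> x * (cre y (ann x \<psi>) S + ann x (cre y \<psi>) S))"
    unfolding anticomm_def ann_comb_def cre_lin by (simp add: sum.distrib algebra_simps)
  also have "\<dots> = (\<Sum>x\<in>UNIV. if x = y then \<beta> y * \<psi> S else 0)"
    by (rule sum.cong) (auto simp: car)
  finally show ?thesis by simp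
qed

lemma anticomm_comb:
  fixes \<alpha> \<beta> :: "'m::{linorder,finite} \<Rightarrow> complex"
  shows "anticomm (cre_comb \<alpha>) (ann_comb \<beta>) \<psi> S = (\<Sum>x\<in>UNIV. cnj (\<alpha> x) * \<beta> x) * \<psi> S"
proof -
  have "ann_comb \<beta> (cre_comb \<alpha> \<psi>) S = (\<Sum>x\<in>UNIV. \<beta> x * (\<Sum>y\<in>UNIV. cnj (\<alpha> y) * ann x (cre y \<psi>) S))"
    unfolding ann_comb_def cre_comb_def ann_lin ..
  also have "\<dots> = (\<Sum>x\<in>UNIV. \<Sum>y\<in>UNIV. cnj (\<alpha> y) * (\<beta> x * ann x (cre y \<psi>) S))"
    by (simp only: sum_distrib_left mult.left_commute)
  also have "\<dots> = (\<Sum>y\<in>UNIV. \<Sum>x\<in>UNIV. cnj (\<alpha> y) * (\<beta> x * ann x (cre y \<psi>) S))"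
    by (rule sum.swap)
  also have "\<dots> = (\<Sum>y\<in>UNIV. cnj (\<alpha> y) * ann_comb \<beta> (cre y \<psi>) S)"
    by (simp only: ann_comb_def sum_distrib_left)
  finally have h1: "ann_comb \<beta> (cre_comb \<alpha> \<psi>) S = (\<Sum>y\<in>UNIV. cnj (\<alpha> y) * ann_comb \<beta> (cre y \<psi>) S)" .
  have h2: "cre_comb \<alpha> (ann_comb \<beta> \<psi>) S = (\<Sum>y\<in>UNIV. cnj (\<alpha> y) * cre y (ann_comb \<beta> \<psi>) S)"
    unfolding cre_comb_def ..
  have "anticomm (cre_comb \<alpha>) (ann_comb \<beta>) \<psi> S
     = (\<Sum>y\<in>UNIV. cnj (\<alpha> y) * anticomm (cre y) (ann_comb \<beta>) \<psi> S)"
    unfolding anticomm_def h1 h2 by (simp only: sum.distrib distrib_left)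
  also have "\<dots> = (\<Sum>y\<in>UNIV. cnj (\<alpha> y) * \<beta> y * \<psi> S)"
    by (simp only: anticomm_cre_comb1 mult.assoc)
  finally show ?thesis by (simp only: sum_distrib_right)
qed



context
  fixes L :: nat and V :: "nat \<Rightarrow> 'v::finite set" and v0 :: "nat \<Rightarrow> 'v"
  assumes constr: "construction L V v0"
begin

lemma v0_in: "l \<in> {1..L} \<Longrightarrow> v0 l \<in> V l"
  using constr unfolding construction_def by auto

lemma v0_lt: assumes "l \<in> {1..L}" "k \<in> {1..L}" "v0 k \<in> V l" "k \<noteq> l" shows "k < l"
proof (rule ccontr)
  assume "\<not> k < l"
  then have "l < k" using assms by simp
  then have "k \<in> {2..L}" "l \<in> {1..<k}" using assms by auto
  then have "v0 k \<notin> V l" using constr unfolding construction_def by blast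
  then show False using assms by simp
qed

lemma v0_inj: assumes "l \<in> {1..L}" "k \<in> {1..L}" "v0 k = v0 l" shows "k = l"
proof (rule ccontr)
  assume ne: "k \<noteq> l"
  have "k < l" using v0_lt[OF assms(1,2)] v0_in[OF assms(1)] assms(3) ne by simp
  moreover have "l < k" using v0_lt[OF assms(2,1)] v0_in[OF assms(2)] assms(3) ne by simp
  ultimately show False by simp
qed

lemma dedge_v0: "l \<in> {1..L} \<Longrightarrow> dedge L V v0 w (v0 l) \<longleftrightarrow> w \<in> V l \<and> w \<noteq> v0 l"
  unfolding dedge_def using v0_inj by metis

lemma dedge_target: "dedge L V v0 w u \<Longrightarrow> u \<in> v0 ` {1..L}"
  unfolding dedge_def by auto

definition rk :: "'v \<Rightarrow> nat" where "rk x = \<Sum>{k\<in>{1..L}. v0 k = x}"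

lemma rk_v0: assumes "l \<in> {1..L}" shows "rk (v0 l) = l"
proof -
  have "{k\<in>{1..L}. v0 k = v0 l} = {l}" using assms v0_inj by auto
  then show ?thesis unfolding rk_def by simp
qed

lemma rk_white: "x \<notin> v0 ` {1..L} \<Longrightarrow> rk x = 0"
  unfolding rk_def by (auto intro!: sum.neutral)

lemma dedge_rk: assumes "dedge L V v0 a b" shows "rk a < rk b"
proof -
  obtain l where l: "l \<in> {1..L}" "b = v0 l" "a \<in> V l" "a \<noteq> v0 l"
    using assms unfolding dedge_def by auto
  show ?thesis
  proof (cases "a \<in> v0 ` {1..L}")
    case True
    then obtain k where k: "k \<in> {1..L}" "a = v0 k" by auto
    then have "k < l" using v0_lt[OF l(1) k(1)] l by auto
    then show ?thesis using k l rk_v0 by simp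
  next
    case False
    then show ?thesis using rk_white l rk_v0 by simp
  qed
qed

lemma dpath_distinct: assumes "successively (dedge L V v0) p" shows "distinct p"
proof -
  have "successively (\<lambda>a b. rk a < rk b) p"
    using assms by (rule successively_mono) (use dedge_rk in auto)
  then have "sorted_wrt (\<lambda>a b. rk a < rk b) p"
    by (subst (asm) successively_conv_sorted_wrt) (auto simp: transp_def)
  then have "sorted_wrt (<) (map rk p)" by (simp add: sorted_wrt_map)
  then have "distinct (map rk p)" by (simp add: strict_sorted_iff)
  then show ?thesis by (simp add: distinct_map)
qed

lemma finite_dpaths: "finite (dpaths L V v0 v u)"
proof (rule finite_subset)
  show "dpaths L V v0 v u \<subseteq> {xs. set xs \<subseteq> UNIV \<and> length xs \<le> card (UNIV::'v set)}"
  proof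
    fix p assume "p \<in> dpaths L V v0 v u"
    then have "distinct p" using dpath_distinct unfolding dpaths_def by blast
    then have "length p = card (set p)" by (simp add: distinct_card)
    also have "\<dots> \<le> card (UNIV::'v set)" by (rule card_mono) auto
    finally show "p \<in> {xs. set xs \<subseteq> UNIV \<and> length xs \<le> card (UNIV::'v set)}" by simp
  qed
qed (rule finite_lists_length_le, simp)

lemma white_paths: assumes "u \<notin> v0 ` {1..L}"
  shows "dpaths L V v0 v u = (if v = u then {[u]} else {})"
proof -
  have "p = [u]" if "p \<in> dpaths L V v0 v u" for p
  proof (rule ccontr)
    assume "p \<noteq> [u]"
    have ne: "p \<noteq> []" "last p = u" "successively (dedge L V v0) p"
      using that unfolding dpaths_def by auto
    then have "butlast p \<noteq> []" using \<open>p \<noteq> [u]\<close>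
      by (metis append_butlast_last_id append_Nil)
    have "p = butlast p @ [u]" using ne by (metis append_butlast_last_id)
    then have "dedge L V v0 (last (butlast p)) u" using ne(3) \<open>butlast p \<noteq> []\<close>
      by (metis list.sel(1) not_Cons_self2 successively_append_iff)
    then show False using dedge_target assms by blast
  qed
  moreover have "v = u" if "p \<in> dpaths L V v0 v u" for p
    using \<open>\<And>p. p \<in> dpaths L V v0 v u \<Longrightarrow> p = [u]\<close>[OF that] that unfolding dpaths_def by auto
  moreover have "[u] \<in> dpaths L V v0 u u" unfolding dpaths_def by auto
  ultimately show ?thesis
  proof (cases "v = u")
    case True
    have "dpaths L V v0 v u = {[u]}"
    proof (intro equalityI subsetI)
      fix p assume "p \<in> dpaths L V v0 v u"
      then show "p \<in> {[u]}" using \<open>\<And>p. p \<in> dpaths L V v0 v u \<Longrightarrow> p = [u]\<close> by simp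
    next
      fix p assume "p \<in> {[u]}"
      then show "p \<in> dpaths L V v0 v u" using \<open>[u] \<in> dpaths L V v0 u u\<close> True by simp
    qed
    then show ?thesis using True by simp
  next
    case False
    have "dpaths L V v0 v u = {}"
      using \<open>\<And>p. p \<in> dpaths L V v0 v u \<Longrightarrow> v = u\<close> False by (meson equals0I)
    then show ?thesis using False by simp
  qed
qed

lemma black_paths: assumes l: "l \<in> {1..L}" and ne: "v \<noteq> v0 l"
  shows "dpaths L V v0 v (v0 l) = (\<lambda>q. q @ [v0 l]) ` (\<Union>w\<in>V l - {v0 l}. dpaths L V v0 v w)"
proof (intro equalityI subsetI)
  fix p assume p: "p \<in> dpaths L V v0 v (v0 l)"
  have pp: "p \<noteq> []" "hd p = v" "last p = v0 l" "successively (dedge L V v0) p"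
    using p unfolding dpaths_def by auto
  define q where "q = butlast p"
  have pq: "p = q @ [v0 l]" using pp unfolding q_def by (metis append_butlast_last_id)
  have qne: "q \<noteq> []" using pq pp ne by auto
  have hq: "hd q = v" using pq pp qne by (cases q) auto
  have sq: "successively (dedge L V v0) q" "dedge L V v0 (last q) (v0 l)"
    using pp(4) qne unfolding pq successively_append_iff by auto
  then have "last q \<in> V l - {v0 l}" using dedge_v0[OF l] by auto
  moreover have "q \<in> dpaths L V v0 v (last q)" using qne hq sq unfolding dpaths_def by auto
  ultimately show "p \<in> (\<lambda>q. q @ [v0 l]) ` (\<Union>w\<in>V l - {v0 l}. dpaths L V v0 v w)"
    using pq by blast
next
  fix p assume "p \<in> (\<lambda>q. q @ [v0 l]) ` (\<Union>w\<in>V l - {v0 l}. dpaths L V v0 v w)"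
  then obtain q w where q: "p = q @ [v0 l]" "w \<in> V l - {v0 l}" "q \<in> dpaths L V v0 v w" by auto
  have "dedge L V v0 w (v0 l)" using q(2) dedge_v0[OF l] by auto
  then show "p \<in> dpaths L V v0 v (v0 l)"
    using q unfolding dpaths_def by (auto simp: successively_append_iff)
qed

lemma pss_black: assumes l: "l \<in> {1..L}" and ne: "v \<noteq> v0 l"
  shows "path_sign_sum L V v0 v (v0 l) = - (\<Sum>w\<in>V l - {v0 l}. path_sign_sum L V v0 v w)"
proof -
  have fin: "finite (V l)" using constr l unfolding construction_def by auto
  have inj: "inj_on (\<lambda>q. q @ [v0 l]) X" for X by (rule inj_onI) simp
  have "path_sign_sum L V v0 v (v0 l) =
     (\<Sum>p\<in>(\<lambda>q. q @ [v0 l]) ` (\<Union>w\<in>V l - {v0 l}. dpaths L V v0 v w). (-1::int) ^ (length p - 1))"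
    unfolding path_sign_sum_def black_paths[OF l ne] ..
  also have "\<dots> = (\<Sum>q\<in>(\<Union>w\<in>V l - {v0 l}. dpaths L V v0 v w). (-1::int) ^ length q)"
    by (subst sum.reindex[OF inj]) simp
  also have "\<dots> = (\<Sum>w\<in>V l - {v0 l}. \<Sum>q\<in>dpaths L V v0 v w. (-1::int) ^ length q)"
  proof (rule sum.UNION_disjoint)
    show "finite (V l - {v0 l})" using fin by simp
    show "\<forall>w\<in>V l - {v0 l}. finite (dpaths L V v0 v w)" using finite_dpaths by blast
    show "\<forall>w\<in>V l - {v0 l}. \<forall>w'\<in>V l - {v0 l}. w \<noteq> w' \<longrightarrow> dpaths L V v0 v w \<inter> dpaths L V v0 v w' = {}"
      unfolding dpaths_def by blast
  qed
  also have "\<dots> = (\<Sum>w\<in>V l - {v0 l}. - path_sign_sum L V v0 v w)"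
  proof (intro sum.cong refl)
    fix w
    have "(\<Sum>q\<in>dpaths L V v0 v w. (-1::int) ^ length q) = (\<Sum>q\<in>dpaths L V v0 v w. - ((-1) ^ (length q - 1)))"
    proof (intro sum.cong refl)
      fix q assume "q \<in> dpaths L V v0 v w"
      then have "length q = Suc (length q - 1)" unfolding dpaths_def by (cases q) auto
      then show "(-1::int) ^ length q = - ((-1) ^ (length q - 1))" by (metis power_Suc mult_minus1)
    qed
    then show "(\<Sum>q\<in>dpaths L V v0 v w. (-1::int) ^ length q) = - path_sign_sum L V v0 v w"
      unfolding path_sign_sum_def by (simp add: sum_negf)
  qed
  finally show ?thesis by (simp add: sum_negf)
qed

end


lemma sum_pairs:
  fixes h :: "'v::finite \<Rightarrow> complex" and \<sigma> :: bool
  shows "(\<Sum>x\<in>UNIV. if snd x = \<sigma> \<and> fst x \<in> A then h (fst x) else 0) = (\<Sum>u\<in>A. h u)"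
proof -
  have "(\<Sum>x\<in>UNIV. if snd x = \<sigma> \<and> fst x \<in> A then h (fst x) else 0)
      = (\<Sum>x\<in>(\<lambda>u. (u,\<sigma>)) ` A. if snd x = \<sigma> \<and> fst x \<in> A then h (fst x) else 0)"
    by (rule sum.mono_neutral_right) auto
  also have "\<dots> = (\<Sum>u\<in>A. h u)"
    by (subst sum.reindex) (auto intro: inj_onI)
  finally show ?thesis .
qed

lemma sum_bool: "(\<Sum>\<tau>\<in>(UNIV::bool set). F \<tau>) = F \<sigma> + F (\<not>\<sigma>)"
proof -
  have u: "(UNIV::bool set) = {\<sigma>, \<not>\<sigma>}" by auto
  have "sum F {\<sigma>, \<not>\<sigma>} = F \<sigma> + F (\<not>\<sigma>)" by simp
  then show ?thesis by (simp only: u)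
qed

lemma cre_vac: "cre x vacuum S = (if S = {x} then 1 else 0)"
  unfolding cre_def vacuum_def fsign_def by auto

lemma cre_comb_vac_single: 
  fixes \<alpha> :: "'m::{linorder,finite} \<Rightarrow> complex"
  shows "cre_comb \<alpha> vacuum {y} = cnj (\<alpha> y)"
  unfolding cre_comb_def cre_vac by (simp add: if_distrib cong: if_cong)

lemma cre_comb_vac_other:
  fixes \<alpha> :: "'m::{linorder,finite} \<Rightarrow> complex"
  shows "\<forall>y. S \<noteq> {y} \<Longrightarrow> cre_comb \<alpha> vacuum S = 0"
  unfolding cre_comb_def cre_vac by simp

lemma ann_sector:
  assumes "\<psi> \<in> one_electron_sector L V \<sigma>"
  shows "ann x \<psi> S = (if S = {} then \<psi> {x} else 0)"
proof (cases "x \<in> S")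
  case True
  then show ?thesis by (auto simp: ann_def)
next
  case False
  show ?thesis
  proof (cases "S = {}")
    case True then show ?thesis by (simp add: ann_def fsign_def)
  next
    case ne: False
    have "\<psi> (insert x S) = 0"
    proof (rule ccontr)
      assume "\<psi> (insert x S) \<noteq> 0"
      then obtain u where u: "insert x S = {(u,\<sigma>)}" using assms unfolding one_electron_sector_def by blast
      then have "S \<subseteq> {x}" by blast
      then have "S = {}" using False by blast
      then show False using ne by contradiction
    qed
    then show ?thesis using False ne by (simp add: ann_def)
  qed
qed

lemma sector_spin:
  assumes "\<psi> \<in> one_electron_sector L V \<sigma>" "\<tau> \<noteq> \<sigma>"
  shows "\<psi> {(u,\<tau>)} = 0"
  using assms unfolding one_electron_sector_def by auto

lemma cre_delta: "cre x (\<lambda>T. if T = {} then c else 0) S = (if S = {x} then c else 0)"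
proof (cases "S = {x}")
  case True
  then show ?thesis by (simp add: cre_def fsign_def)
next
  case False
  then have "\<not> (x \<in> S \<and> S - {x} = {})" by blast
  have "cre x (\<lambda>T. if T = {} then c else 0) S = (if x \<in> S then fsign x (S - {x}) * (if S - {x} = {} then c else 0) else 0)"
    by (simp only: cre_def)
  also have "\<dots> = 0" using \<open>\<not> (x \<in> S \<and> S - {x} = {})\<close> by auto
  finally show ?thesis using False by simp
qed

lemma H_sector:
  fixes V :: "nat \<Rightarrow> 'v::{finite,linorder} set"
  assumes "\<psi> \<in> one_electron_sector L V \<sigma>"
  shows "H_hop t L V \<psi> S = complex_of_real t *
     (\<Sum>l\<in>{1..L}. \<Sum>u\<in>V l. if S = {(u,\<sigma>)} then (\<Sum>w\<in>V l. \<psi> {(w,\<sigma>)}) else 0)"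
proof -
  have c: "(\<Sum>x\<in>UNIV. b_coef V l \<tau> x * \<psi> {x}) = (if \<tau> = \<sigma> then (\<Sum>w\<in>V l. \<psi> {(w,\<sigma>)}) else 0)" for l \<tau>
  proof -
    have "(\<Sum>x\<in>UNIV. b_coef V l \<tau> x * \<psi> {x}) = (\<Sum>x\<in>UNIV. if snd x = \<tau> \<and> fst x \<in> V l then (if \<tau> = \<sigma> then \<psi> {(fst x, \<sigma>)} else 0) else 0)"
      by (rule sum.cong) (auto simp: b_coef_def sector_spin[OF assms])
    also have "\<dots> = (\<Sum>u\<in>V l. if \<tau> = \<sigma> then \<psi> {(u, \<sigma>)} else 0)" by (rule sum_pairs)
    finally show ?thesis by simp
  qed
  have bop: "b_op V l \<tau> \<psi> = (\<lambda>T. if T = {} then (\<Sum>x\<in>UNIV. b_coef V l \<tau> x * \<psi> {x}) else 0)" for l \<tau>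
    unfolding b_op_def ann_comb_def ann_sector[OF assms] by (rule ext) auto
  have inner: "(\<Sum>\<tau>\<in>UNIV. b_dag V l \<tau> (b_op V l \<tau> \<psi>) S) =
      (\<Sum>u\<in>V l. if S = {(u,\<sigma>)} then (\<Sum>w\<in>V l. \<psi> {(w,\<sigma>)}) else 0)" for l
  proof -
    define sl where "sl = (\<Sum>w\<in>V l. \<psi> {(w,\<sigma>)})"
    have G: "b_dag V l \<tau> (b_op V l \<tau> \<psi>) S = (\<Sum>x\<in>UNIV. cnj (b_coef V l \<tau> x) * (if S = {x} then (if \<tau> = \<sigma> then sl else 0) else 0))" for \<tau>
      unfolding b_dag_def cre_comb_def bop c cre_delta sl_def ..
    have G0: "b_dag V l (\<not>\<sigma>) (b_op V l (\<not>\<sigma>) \<psi>) S = 0"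
      unfolding G by (intro sum.neutral ballI) simp
    have "(\<Sum>\<tau>\<in>UNIV. b_dag V l \<tau> (b_op V l \<tau> \<psi>) S) = b_dag V l \<sigma> (b_op V l \<sigma> \<psi>) S + b_dag V l (\<not>\<sigma>) (b_op V l (\<not>\<sigma>) \<psi>) S"
      by (rule sum_bool)
    also have "\<dots> = (\<Sum>x\<in>UNIV. cnj (b_coef V l \<sigma> x) * (if S = {x} then sl else 0))"
      unfolding G0 G by simp
    finally have "(\<Sum>\<tau>\<in>UNIV. b_dag V l \<tau> (b_op V l \<tau> \<psi>) S) =
       (\<Sum>x\<in>UNIV. cnj (b_coef V l \<sigma> x) * (if S = {x} then (\<Sum>w\<in>V l. \<psi> {(w,\<sigma>)}) else 0))"
      unfolding sl_def .
    also have "\<dots> = (\<Sum>x\<in>UNIV. if snd x = \<sigma> \<and> fst x \<in> V l then (if S = {(fst x,\<sigma>)} then (\<Sum>w\<in>V l. \<psi> {(w,\<sigma>)}) else 0) else 0)"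
      by (rule sum.cong) (auto simp: b_coef_def)
    also have "\<dots> = (\<Sum>u\<in>V l. if S = {(u,\<sigma>)} then (\<Sum>w\<in>V l. \<psi> {(w,\<sigma>)}) else 0)"
      by (rule sum_pairs)
    finally show ?thesis .
  qed
  show ?thesis unfolding H_hop_def inner ..
qed

lemma sum_sq_zero:
  fixes s :: "nat \<Rightarrow> complex"
  assumes "finite I" "(\<Sum>l\<in>I. s l * cnj (s l)) = 0"
  shows "\<forall>l\<in>I. s l = 0"
proof -
  have "(\<Sum>l\<in>I. s l * cnj (s l)) = (\<Sum>l\<in>I. complex_of_real ((cmod (s l))^2))"
    by (simp only: complex_norm_square)
  also have "\<dots> = complex_of_real (\<Sum>l\<in>I. (cmod (s l))^2)"
    by (simp only: of_real_sum)
  finally have "complex_of_real (\<Sum>l\<in>I. (cmod (s l))^2) = 0" using assms by simp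
  then have "(\<Sum>l\<in>I. (cmod (s l))^2) = 0" by (simp only: of_real_eq_0_iff)
  then have "\<forall>l\<in>I. (cmod (s l))^2 = 0" using assms(1) by (subst (asm) sum_nonneg_eq_0_iff) auto
  then show ?thesis by simp
qed

lemma quad:
  fixes f :: "'v::finite \<Rightarrow> complex" and s :: "nat \<Rightarrow> complex"
  shows "(\<Sum>u\<in>UNIV. cnj (f u) * (\<Sum>l\<in>I. if u \<in> V l then s l else 0))
     = (\<Sum>l\<in>I. s l * cnj (\<Sum>u\<in>V l. f u))"
proof -
  have "(\<Sum>u\<in>UNIV. cnj (f u) * (\<Sum>l\<in>I. if u \<in> V l then s l else 0))
      = (\<Sum>l\<in>I. \<Sum>u\<in>UNIV. if u \<in> V l then cnj (f u) * s l else 0)"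
    by (simp add: sum_distrib_left sum.swap[where A=UNIV] if_distrib cong: if_cong)
  also have "\<dots> = (\<Sum>l\<in>I. \<Sum>u\<in>V l. cnj (f u) * s l)"
    by (simp add: sum.If_cases Int_absorb1)
  finally show ?thesis by (simp add: cnj_sum sum_distrib_left mult.commute)
qed



lemma a_coef_eq:
  "a_coef L V v0 v \<sigma> (u,\<tau>) = (if \<tau> = \<sigma> then of_int (path_sign_sum L V v0 v u) else 0)"
  unfolding a_coef_def reach_def path_sign_sum_def by auto

context
  fixes L :: nat and V :: "nat \<Rightarrow> 'v::{finite,linorder} set" and v0 :: "nat \<Rightarrow> 'v"
  assumes constr: "construction L V v0" and all: "all_vertices L V = UNIV"
begin

lemma W_eq: "white_vertices L V v0 = UNIV - v0 ` {1..L}"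
  unfolding white_vertices_def all ..

lemma P_white: "u \<notin> v0 ` {1..L} \<Longrightarrow> path_sign_sum L V v0 v u = (if v = u then 1 else 0)"
  unfolding path_sign_sum_def white_paths[OF constr] by simp

lemma sumV: assumes v: "v \<in> white_vertices L V v0" and l: "l \<in> {1..L}"
  shows "(\<Sum>u\<in>V l. path_sign_sum L V v0 v u) = 0"
proof -
  have fin: "finite (V l)" by simp
  have ne: "v \<noteq> v0 l" using v l W_eq by auto
  have "(\<Sum>u\<in>V l. path_sign_sum L V v0 v u) = path_sign_sum L V v0 v (v0 l) + (\<Sum>u\<in>V l - {v0 l}. path_sign_sum L V v0 v u)"
    using sum.remove[OF fin v0_in[OF constr l]] by blast
  then show ?thesis using pss_black[OF constr l ne] by simp
qed

lemma key:
  fixes f :: "'v \<Rightarrow> complex"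
  assumes s: "\<forall>l\<in>{1..L}. (\<Sum>w\<in>V l. f w) = 0"
  shows "f u = (\<Sum>v\<in>white_vertices L V v0. f v * of_int (path_sign_sum L V v0 v u))"
proof -
  let ?Q = "\<lambda>u. f u = (\<Sum>v\<in>white_vertices L V v0. f v * of_int (path_sign_sum L V v0 v u))"
  have wh: "?Q u" if "u \<notin> v0 ` {1..L}" for u
  proof -
    have "(\<Sum>v\<in>white_vertices L V v0. f v * of_int (path_sign_sum L V v0 v u))
        = (\<Sum>v\<in>white_vertices L V v0. if v = u then f u else 0)"
      by (rule sum.cong) (auto simp: P_white[OF that])
    also have "\<dots> = f u" using that W_eq by simp
    finally show ?thesis by simp
  qed
  have bl: "l \<in> {1..L} \<longrightarrow> ?Q (v0 l)" for l
  proof (induction l rule: less_induct)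
    case (less l)
    show ?case
    proof
      assume l: "l \<in> {1..L}"
      have Qw: "?Q w" if w: "w \<in> V l - {v0 l}" for w
      proof (cases "w \<in> v0 ` {1..L}")
        case True
        then obtain k where k: "k \<in> {1..L}" "w = v0 k" by auto
        then have "k < l" using v0_lt[OF constr l k(1)] w by auto
        then show ?thesis using less k by blast
      next
        case False then show ?thesis by (rule wh)
      qed
      have fin: "finite (V l)" by simp
      have "(\<Sum>v\<in>white_vertices L V v0. f v * of_int (path_sign_sum L V v0 v (v0 l)))
          = (\<Sum>v\<in>white_vertices L V v0. - (\<Sum>w\<in>V l - {v0 l}. f v * of_int (path_sign_sum L V v0 v w)))"
      proof (rule sum.cong)
        fix v assume "v \<in> white_vertices L V v0"
        then have "v \<noteq> v0 l" using W_eq l by auto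
        then show "f v * of_int (path_sign_sum L V v0 v (v0 l)) = - (\<Sum>w\<in>V l - {v0 l}. f v * of_int (path_sign_sum L V v0 v w))"
          using pss_black[OF constr l] by (simp add: sum_distrib_left)
      qed simp
      also have "\<dots> = - (\<Sum>w\<in>V l - {v0 l}. \<Sum>v\<in>white_vertices L V v0. f v * of_int (path_sign_sum L V v0 v w))"
        by (simp add: sum_negf sum.swap[where A="white_vertices L V v0"])
      also have "\<dots> = - (\<Sum>w\<in>V l - {v0 l}. f w)"
        using Qw by simp
      also have "\<dots> = f (v0 l)"
      proof -
        have "f (v0 l) + (\<Sum>w\<in>V l - {v0 l}. f w) = 0"
          using sum.remove[OF fin v0_in[OF constr l], of f] s l by simp
        then have "f (v0 l) = - (\<Sum>w\<in>V l - {v0 l}. f w)" by (simp add: eq_neg_iff_add_eq_0)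
        then show ?thesis by simp
      qed
      finally show "?Q (v0 l)" by simp
    qed
  qed
  show ?thesis
  proof (cases "u \<in> v0 ` {1..L}")
    case True then show ?thesis using bl by blast
  next
    case False then show ?thesis by (rule wh)
  qed
qed

end


theorem mainTheorem3:
  fixes L :: nat and V :: "nat \<Rightarrow> 'v::{finite,linorder} set" and v0 :: "nat \<Rightarrow> 'v"
    and t :: real and \<sigma> :: bool
  assumes constr: "construction L V v0"
    and all: "all_vertices L V = UNIV"
    and tpos: "t > 0"
  shows "(\<forall>v\<in>white_vertices L V v0. \<forall>l\<in>{1..L}.
            anticomm (a_dag L V v0 v \<sigma>) (b_op V l \<sigma>) = (\<lambda>\<psi> S. 0))
       \<and> (\<forall>u\<in>white_vertices L V v0. \<forall>v\<in>white_vertices L V v0.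
            anticomm (cre (u, \<sigma>)) (a_op L V v0 v \<sigma>) = (if u = v then (\<lambda>\<psi>. \<psi>) else (\<lambda>\<psi> S. 0)))
       \<and> is_basis_of (white_vertices L V v0) (\<lambda>v. a_dag L V v0 v \<sigma> vacuum)
            (zero_energy_space t L V \<sigma>)
       \<and> card (white_vertices L V v0) = card (all_vertices L V) - L"
proof -
  let ?W = "white_vertices L V v0"
  let ?P = "path_sign_sum L V v0"
  let ?phi = "\<lambda>v. a_dag L V v0 v \<sigma> vacuum"
  have Weq: "?W = UNIV - v0 ` {1..L}" by (rule W_eq[OF constr all])
  have Pw: "?P v u = (if v = u then 1 else 0)" if "u \<in> ?W" for u v
    using P_white[OF constr all] that Weq by auto
  have sumc: "(\<Sum>u\<in>V l. (of_int (?P v u) :: complex)) = 0" if "v \<in> ?W" "l \<in> {1..L}" for v l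
  proof -
    have "(\<Sum>u\<in>V l. (of_int (?P v u) :: complex)) = of_int (\<Sum>u\<in>V l. ?P v u)" by simp
    then show ?thesis using sumV[OF constr all that] by simp
  qed
  have sumx: "(\<Sum>x\<in>UNIV. cnj (a_coef L V v0 v \<sigma> x) * b_coef V l \<sigma> x) = 0"
    if "v \<in> ?W" "l \<in> {1..L}" for v l
  proof -
    have "(\<Sum>x\<in>UNIV. cnj (a_coef L V v0 v \<sigma> x) * b_coef V l \<sigma> x)
      = (\<Sum>x\<in>UNIV. if snd x = \<sigma> \<and> fst x \<in> V l then (of_int (?P v (fst x)) :: complex) else 0)"
      by (rule sum.cong) (auto simp: a_coef_eq b_coef_def)
    also have "\<dots> = (\<Sum>u\<in>V l. (of_int (?P v u) :: complex))" by (rule sum_pairs)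
    finally show ?thesis using sumc[OF that] by simp
  qed
  have phi1: "?phi v {(u,\<tau>)} = (if \<tau> = \<sigma> then of_int (?P v u) else 0)" for v u \<tau>
    unfolding a_dag_def cre_comb_vac_single a_coef_eq by simp
  have phi0: "?phi v S = 0" if "\<forall>y. S \<noteq> {y}" for v S
    unfolding a_dag_def by (rule cre_comb_vac_other[OF that])
  have P1: "\<forall>v\<in>?W. \<forall>l\<in>{1..L}. anticomm (a_dag L V v0 v \<sigma>) (b_op V l \<sigma>) = (\<lambda>\<psi> S. 0)"
  proof (intro ballI ext)
    fix v l \<psi> S assume "v \<in> ?W" "l \<in> {1..L}"
    show "anticomm (a_dag L V v0 v \<sigma>) (b_op V l \<sigma>) \<psi> S = 0"
      unfolding a_dag_def b_op_def anticomm_comb sumx[OF \<open>v \<in> ?W\<close> \<open>l \<in> {1..L}\<close>] by simp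
  qed
  have P2: "\<forall>u\<in>?W. \<forall>v\<in>?W. anticomm (cre (u, \<sigma>)) (a_op L V v0 v \<sigma>) = (if u = v then (\<lambda>\<psi>. \<psi>) else (\<lambda>\<psi> S. 0))"
  proof (intro ballI)
    fix u v assume u: "u \<in> ?W" and v: "v \<in> ?W"
    have "anticomm (cre (u, \<sigma>)) (a_op L V v0 v \<sigma>) \<psi> S = (if v = u then \<psi> S else 0)" for \<psi> S
      unfolding a_op_def anticomm_cre_comb1 a_coef_eq using Pw[OF u, of v] by simp
    then show "anticomm (cre (u, \<sigma>)) (a_op L V v0 v \<sigma>) = (if u = v then (\<lambda>\<psi>. \<psi>) else (\<lambda>\<psi> S. 0))"
      by (auto simp: fun_eq_iff)
  qed
  have mem: "?phi v \<in> zero_energy_space t L V \<sigma>" if v: "v \<in> ?W" for v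
  proof -
    have sec: "?phi v \<in> one_electron_sector L V \<sigma>"
      unfolding one_electron_sector_def
    proof (intro CollectI allI impI)
      fix S assume nz: "?phi v S \<noteq> 0"
      have "\<exists>y. S = {y}"
      proof (rule ccontr)
        assume "\<not> (\<exists>y. S = {y})"
        then have "?phi v S = 0" by (intro phi0) simp
        then show False using nz by simp
      qed
      then obtain y where y: "S = {y}" by blast
      obtain u \<tau> where uy: "y = (u,\<tau>)" by (cases y)
      have "?phi v {(u,\<tau>)} \<noteq> 0" using nz y uy by simp
      then have "\<tau> = \<sigma>" by (simp add: phi1 split: if_splits)
      then have "S = {(u, \<sigma>)}" using y uy by simp
      then show "\<exists>u\<in>all_vertices L V. S = {(u, \<sigma>)}" using all by blast
    qed
    have "H_hop t L V (?phi v) = (\<lambda>S. 0)"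
    proof
      fix S
      have z: "(\<Sum>w\<in>V l. ?phi v {(w,\<sigma>)}) = 0" if "l \<in> {1..L}" for l
        using sumc[OF v that] by (simp add: phi1)
      have "(\<Sum>l\<in>{1..L}. \<Sum>u\<in>V l. if S = {(u,\<sigma>)} then (\<Sum>w\<in>V l. ?phi v {(w,\<sigma>)}) else 0) = 0"
        by (intro sum.neutral ballI) (simp add: z)
      then show "H_hop t L V (?phi v) S = 0" unfolding H_sector[OF sec] by simp
    qed
    then show ?thesis using sec unfolding zero_energy_space_def by simp
  qed
  have indep: "\<forall>\<beta>. (\<forall>S. (\<Sum>i\<in>?W. \<beta> i * ?phi i S) = 0) \<longrightarrow> (\<forall>i\<in>?W. \<beta> i = 0)"
  proof (intro allI impI ballI)
    fix \<beta> u assume h: "\<forall>S. (\<Sum>i\<in>?W. \<beta> i * ?phi i S) = 0" and u: "u \<in> ?W"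
    have "(\<Sum>i\<in>?W. \<beta> i * ?phi i {(u,\<sigma>)}) = (\<Sum>i\<in>?W. if i = u then \<beta> u else 0)"
      by (rule sum.cong) (auto simp: phi1 Pw[OF u])
    also have "\<dots> = \<beta> u" using u by simp
    finally show "\<beta> u = 0" using h by metis
  qed
  have span: "\<forall>\<psi>\<in>zero_energy_space t L V \<sigma>. \<exists>\<beta>. \<psi> = (\<lambda>S. \<Sum>i\<in>?W. \<beta> i * ?phi i S)"
  proof
    fix \<psi> assume z: "\<psi> \<in> zero_energy_space t L V \<sigma>"
    then have sec: "\<psi> \<in> one_electron_sector L V \<sigma>" and H0: "H_hop t L V \<psi> = (\<lambda>S. 0)"
      unfolding zero_energy_space_def by auto
    define f where "f u = \<psi> {(u,\<sigma>)}" for u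
    define s where "s l = (\<Sum>w\<in>V l. f w)" for l
    have G: "(\<Sum>l\<in>{1..L}. if u \<in> V l then s l else 0) = 0" for u
    proof -
      have "H_hop t L V \<psi> {(u,\<sigma>)} = 0" using H0 by simp
      then have "complex_of_real t * (\<Sum>l\<in>{1..L}. \<Sum>w\<in>V l. if {(u,\<sigma>)} = {(w,\<sigma>)} then s l else 0) = 0"
        unfolding H_sector[OF sec] s_def f_def .
      moreover have "(\<Sum>w\<in>V l. if {(u,\<sigma>)} = {(w,\<sigma>)} then s l else 0) = (if u \<in> V l then s l else 0)" for l
        by (simp add: sum.delta)
      ultimately show ?thesis using tpos by simp
    qed
    have "(\<Sum>l\<in>{1..L}. s l * cnj (s l)) = (\<Sum>u\<in>UNIV. cnj (f u) * (\<Sum>l\<in>{1..L}. if u \<in> V l then s l else 0))"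
      unfolding quad s_def ..
    also have "\<dots> = 0" using G by simp
    finally have s0: "\<forall>l\<in>{1..L}. s l = 0" by (intro sum_sq_zero) simp_all
    have s0': "\<forall>l\<in>{1..L}. (\<Sum>w\<in>V l. f w) = 0" using s0 unfolding s_def .
    have K: "f u = (\<Sum>v\<in>?W. f v * of_int (?P v u))" for u
      by (rule key[OF constr all s0'])
    have "\<psi> S = (\<Sum>i\<in>?W. f i * ?phi i S)" for S
    proof (cases "\<exists>y. S = {y}")
      case True
      then obtain u \<tau> where S: "S = {(u,\<tau>)}" by auto
      show ?thesis
      proof (cases "\<tau> = \<sigma>")
        case True
        then show ?thesis using K[of u] S by (simp add: phi1 f_def)
      next
        case False
        then show ?thesis using sector_spin[OF sec False] S by (simp add: phi1)
      qed
    next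
      case False
      have "\<psi> S = 0"
      proof (rule ccontr)
        assume "\<psi> S \<noteq> 0"
        then obtain u where "S = {(u,\<sigma>)}" using sec unfolding one_electron_sector_def by blast
        then show False using False by blast
      qed
      then show ?thesis using False phi0 by simp
    qed
    then have "\<psi> = (\<lambda>S. \<Sum>i\<in>?W. f i * ?phi i S)" by (rule ext)
    then show "\<exists>\<beta>. \<psi> = (\<lambda>S. \<Sum>i\<in>?W. \<beta> i * ?phi i S)" by (rule exI[where x=f])
  qed
  have P3: "is_basis_of ?W ?phi (zero_energy_space t L V \<sigma>)"
    unfolding is_basis_of_def using mem indep span by (intro conjI ballI) simp_all
  have inj: "inj_on v0 {1..L}" using v0_inj[OF constr] by (auto intro: inj_onI)
  have "card ?W = card (UNIV::'v set) - card (v0 ` {1..L})"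
    unfolding Weq by (rule card_Diff_subset) auto
  also have "\<dots> = card (all_vertices L V) - L" using card_image[OF inj] all by simp
  finally have P4: "card ?W = card (all_vertices L V) - L" .
  show ?thesis using P1 P2 P3 P4 by (intro conjI)
qed


end
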